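(* Let $P$ be a propositional variable and $T$ a closed term with $\vdash T:\perp\to P$. Then for every term $t$ and every $\bar u\in\mathcal{E}^{<\omega}$, $((T\ t)\ \bar u)\triangleright^*\underline{\mu}.t$, i.e. $((T\ t)\ \bar u)$ reduces to some element of $M_t$.
   Context: Formulas are built from propositional variables and $\perp$ using $\to,\wedge,\vee$. Terms $\mathcal{T}$ and $\mathcal{E}$-terms: with disjoint sets $\mathcal{X}$ ($\lambda$-variables) and $\mathcal{A}$ ($\mu$-variables), $\mathcal{T} ::= x \mid \lambda x.\mathcal{T} \mid (\mathcal{T}\ \mathcal{E}) \mid \langle \mathcal{T},\mathcal{T}\rangle \mid \omega_1\mathcal{T} \mid \omega_2\mathcal{T} \mid \mu a.\mathcal{T} \mid (a\ \mathcal{T})$ and $\mathcal{E} ::= \mathcal{T} \mid \pi_1 \mid \pi_2 \mid [x.\mathcal{T}, y.\mathcal{T}]$. Typing judgements $\Gamma\vdash t:A;\Delta$ are generated by: $\Gamma,x:A\vdash x:A;\Delta$; from $\Gamma,x:A\vdash t:B;\Delta$ infer $\Gamma\vdash\lambda x.t:A\to B;\Delta$; from $\Gamma\vdash u:A\to B;\Delta$ and $\Gamma\vdash v:A;\Delta$ infer $\Gamma\vdash(u\ v):B;\Delta$; from $\Gamma\vdash u:A;\Delta$, $\Gamma\vdash v:B;\Delta$ infer $\Gamma\vdash\langle u,v\rangle:A\wedge B;\Delta$; from $\Gamma\vdash t:A\wedge B;\Delta$ infer $\Gamma\vdash(t\ \pi_1):A;\Delta$ and $\Gamma\vdash(t\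 \pi_2):B;\Delta$; from $\Gamma\vdash t:A;\Delta$ infer $\Gamma\vdash\omega_1t:A\vee B;\Delta$; from $\Gamma\vdash t:B;\Delta$ infer $\Gamma\vdash\omega_2t:A\vee B;\Delta$; from $\Gamma\vdash t:A\vee B;\Delta$, $\Gamma,x:A\vdash u:C;\Delta$, $\Gamma,y:B\vdash v:C;\Delta$ infer $\Gamma\vdash(t\ [x.u,y.v]):C;\Delta$; from $\Gamma\vdash t:A;\Delta,a:A$ infer $\Gamma\vdash(a\ t):\perp;\Delta,a:A$; from $\Gamma\vdash t:\perp;\Delta,a:A$ infer $\Gamma\vdash\mu a.t:A;\Delta$. A closed term of type $A$ is one with $\vdash T:A$ (empty contexts). Reduction $\triangleright$ is the compatible closure of: $(\lambda x.u\ v)\triangleright u[x:=v]$; $(\langle t_1,t_2\rangle\ \pi_i)\triangleright t_i$; $(\omega_i t\ [x_1.u_1,x_2.u_2])\triangleright u_i[x_i:=t]$; $((t\ [x_1.u_1,x_2.u_2])\ \varepsilon)\triangleright(t\ [x_1.(u_1\ \varepsilon),x_2.(u_2\ \varepsilon)])$; $(\mu a.t\ \varepsilon)\triangleright\mu a.t[a:=^*\varepsilon]$ ($t[a:=^*\varepsilon]$ replaces inductively each subterm $(a\ v)$ by $(a\ (v\ \varepsilon))$); $\triangleright^*$ is its reflexive-transitive closure. $\mathcal{E}^{<\omega}$ is the set of finite sequences of $\mathcal{E}$-terms; for $\bar w=w_1\dots w_n$, $(t\ \bar w)$ is $t$ if $n=0$ and $((t\ w_1)\ w_2\dots w_n)$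 otherwise. For a term $t$, $M_t$ is the smallest set containing $t$ such that if $u\in M_t$ and $a\in\mathcal{A}$ then $\mu a.u\in M_t$ and $(a\ u)\in M_t$; $\underline{\mu}.t$ denotes an (unspecified) element of $M_t$, and "$s\triangleright^*\underline{\mu}.t$" means $s\triangleright^* w$ for some $w\in M_t$. *)

theory Defs
  imports Main
begin

datatype form = PVar nat | Bot | Imp form form | Conj form form | Disj form form

text \<open>Lambda-variables and mu-variables are
  two separate index spaces (hence disjoint).
  Lam t = \<lambda>x.t (index 0 of t is x); Case u v = [x.u, y.v] (index 0 in u is x, in v is y);
  Mu t = \<mu>a.t (mu-index 0 of t is a); MApp a t = (a t).\<close>
datatype trm =
    Var nat
  | Lam trm
  | App trm etrm
  | Pair trm trm
  | Inl trm
  | Inr trm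
  | Mu trm
  | MApp nat trm
and etrm =
    ET trm
  | Pi1
  | Pi2
  | Case trm trm

fun liftL :: "nat \<Rightarrow> trm \<Rightarrow> trm" and liftLe :: "nat \<Rightarrow> etrm \<Rightarrow> etrm" where
  "liftL k (Var i) = (if i < k then Var i else Var (Suc i))"
| "liftL k (Lam t) = Lam (liftL (Suc k) t)"
| "liftL k (App t e) = App (liftL k t) (liftLe k e)"
| "liftL k (Pair t s) = Pair (liftL k t) (liftL k s)"
| "liftL k (Inl t) = Inl (liftL k t)"
| "liftL k (Inr t) = Inr (liftL k t)"
| "liftL k (Mu t) = Mu (liftL k t)"
| "liftL k (MApp a t) = MApp a (liftL k t)"
| "liftLe k (ET t) = ET (liftL k t)"
| "liftLe k Pi1 = Pi1"
| "liftLe k Pi2 = Pi2"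
| "liftLe k (Case u v) = Case (liftL (Suc k) u) (liftL (Suc k) v)"

fun liftM :: "nat \<Rightarrow> trm \<Rightarrow> trm" and liftMe :: "nat \<Rightarrow> etrm \<Rightarrow> etrm" where
  "liftM k (Var i) = Var i"
| "liftM k (Lam t) = Lam (liftM k t)"
| "liftM k (App t e) = App (liftM k t) (liftMe k e)"
| "liftM k (Pair t s) = Pair (liftM k t) (liftM k s)"
| "liftM k (Inl t) = Inl (liftM k t)"
| "liftM k (Inr t) = Inr (liftM k t)"
| "liftM k (Mu t) = Mu (liftM (Suc k) t)"
| "liftM k (MApp a t) = MApp (if a < k then a else Suc a) (liftM k t)"
| "liftMe k (ET t) = ET (liftM k t)"
| "liftMe k Pi1 = Pi1"
| "liftMe k Pi2 = Pi2"
| "liftMe k (Case u v) = Case (liftM k u) (liftM k v)"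

fun substL :: "trm \<Rightarrow> nat \<Rightarrow> trm \<Rightarrow> trm" and substLe :: "etrm \<Rightarrow> nat \<Rightarrow> trm \<Rightarrow> etrm" where
  "substL (Var i) k s = (if i < k then Var i else if i = k then s else Var (i - 1))"
| "substL (Lam t) k s = Lam (substL t (Suc k) (liftL 0 s))"
| "substL (App t e) k s = App (substL t k s) (substLe e k s)"
| "substL (Pair t u) k s = Pair (substL t k s) (substL u k s)"
| "substL (Inl t) k s = Inl (substL t k s)"
| "substL (Inr t) k s = Inr (substL t k s)"
| "substL (Mu t) k s = Mu (substL t k (liftM 0 s))"
| "substL (MApp a t) k s = MApp a (substL t k s)"
| "substLe (ET t) k s = ET (substL t k s)"
| "substLe Pi1 k s = Pi1"
| "substLe Pi2 k s = Pi2"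
| "substLe (Case u v) k s = Case (substL u (Suc k) (liftL 0 s)) (substL v (Suc k) (liftL 0 s))"

fun substM :: "trm \<Rightarrow> nat \<Rightarrow> etrm \<Rightarrow> trm" and substMe :: "etrm \<Rightarrow> nat \<Rightarrow> etrm \<Rightarrow> etrm" where
  "substM (Var i) a e = Var i"
| "substM (Lam t) a e = Lam (substM t a (liftLe 0 e))"
| "substM (App t f) a e = App (substM t a e) (substMe f a e)"
| "substM (Pair t u) a e = Pair (substM t a e) (substM u a e)"
| "substM (Inl t) a e = Inl (substM t a e)"
| "substM (Inr t) a e = Inr (substM t a e)"
| "substM (Mu t) a e = Mu (substM t (Suc a) (liftMe 0 e))"
| "substM (MApp b t) a e =
     (if b = a then MApp b (App (substM t a e) e) else MApp b (substM t a e))"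
| "substMe (ET t) a e = ET (substM t a e)"
| "substMe Pi1 a e = Pi1"
| "substMe Pi2 a e = Pi2"
| "substMe (Case u v) a e = Case (substM u a (liftLe 0 e)) (substM v a (liftLe 0 e))"

definition ext :: "'a \<Rightarrow> (nat \<Rightarrow> 'a option) \<Rightarrow> nat \<Rightarrow> 'a option" where
  "ext A G = (\<lambda>i. case i of 0 \<Rightarrow> Some A | Suc j \<Rightarrow> G j)"

inductive typing :: "(nat \<Rightarrow> form option) \<Rightarrow> trm \<Rightarrow> form \<Rightarrow> (nat \<Rightarrow> form option) \<Rightarrow> bool" where
  ty_var: "G x = Some A \<Longrightarrow> typing G (Var x) A D"
| ty_lam: "typing (ext A G) t B D \<Longrightarrow> typing G (Lam t) (Imp A B) D"
| ty_app: "typing G u (Imp A B) D \<Longrightarrow> typing G v A D \<Longrightarrow> typing G (App u (ET v)) B D"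
| ty_pair: "typing G u A D \<Longrightarrow> typing G v B D \<Longrightarrow> typing G (Pair u v) (Conj A B) D"
| ty_pi1: "typing G t (Conj A B) D \<Longrightarrow> typing G (App t Pi1) A D"
| ty_pi2: "typing G t (Conj A B) D \<Longrightarrow> typing G (App t Pi2) B D"
| ty_inl: "typing G t A D \<Longrightarrow> typing G (Inl t) (Disj A B) D"
| ty_inr: "typing G t B D \<Longrightarrow> typing G (Inr t) (Disj A B) D"
| ty_case: "typing G t (Disj A B) D \<Longrightarrow> typing (ext A G) u C D \<Longrightarrow> typing (ext B G) v C D
             \<Longrightarrow> typing G (App t (Case u v)) C D"
| ty_mapp: "D a = Some A \<Longrightarrow> typing G t A D \<Longrightarrow> typing G (MApp a t) Bot D"
| ty_mu: "typing G t Bot (ext A D) \<Longrightarrow> typing G (Mu t) A D"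

inductive red :: "trm \<Rightarrow> trm \<Rightarrow> bool" and rede :: "etrm \<Rightarrow> etrm \<Rightarrow> bool" where
  r_beta: "red (App (Lam u) (ET v)) (substL u 0 v)"
| r_pi1: "red (App (Pair t1 t2) Pi1) t1"
| r_pi2: "red (App (Pair t1 t2) Pi2) t2"
| r_inl: "red (App (Inl t) (Case u1 u2)) (substL u1 0 t)"
| r_inr: "red (App (Inr t) (Case u1 u2)) (substL u2 0 t)"
| r_comm: "red (App (App t (Case u1 u2)) e)
              (App t (Case (App u1 (liftLe 0 e)) (App u2 (liftLe 0 e))))"
| r_mu: "red (App (Mu t) e) (Mu (substM t 0 (liftMe 0 e)))"
| c_lam: "red t t' \<Longrightarrow> red (Lam t) (Lam t')"
| c_app1: "red t t' \<Longrightarrow> red (App t e) (App t' e)"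
| c_app2: "rede e e' \<Longrightarrow> red (App t e) (App t e')"
| c_pair1: "red t t' \<Longrightarrow> red (Pair t s) (Pair t' s)"
| c_pair2: "red s s' \<Longrightarrow> red (Pair t s) (Pair t s')"
| c_inl: "red t t' \<Longrightarrow> red (Inl t) (Inl t')"
| c_inr: "red t t' \<Longrightarrow> red (Inr t) (Inr t')"
| c_mu: "red t t' \<Longrightarrow> red (Mu t) (Mu t')"
| c_mapp: "red t t' \<Longrightarrow> red (MApp a t) (MApp a t')"
| c_et: "red t t' \<Longrightarrow> rede (ET t) (ET t')"
| c_case1: "red u u' \<Longrightarrow> rede (Case u v) (Case u' v)"
| c_case2: "red v v' \<Longrightarrow> rede (Case u v) (Case u v')"

abbreviation reds :: "trm \<Rightarrow> trm \<Rightarrow> bool" where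
  "reds \<equiv> red\<^sup>*\<^sup>*"

definition apps :: "trm \<Rightarrow> etrm list \<Rightarrow> trm" where
  "apps t ws = foldl App t ws"

text \<open>In de Bruijn form, \<mu>a.u with a bound variable fresh for t is Mu u where the
  occurrence of t inside u has its free mu-indices shifted by one.\<close>
inductive inM :: "trm \<Rightarrow> trm \<Rightarrow> bool" where
  M_base: "inM t t"
| M_app: "inM t u \<Longrightarrow> inM t (MApp a u)"
| M_mu: "inM (liftM 0 t) u \<Longrightarrow> inM t (Mu u)"

end

theory Submission
  imports Defs
begin

lemma liftL_liftL:
  shows "i \<le> j \<Longrightarrow> liftL i (liftL j u) = liftL (Suc j) (liftL i u)"
    and "i \<le> j \<Longrightarrow> liftLe i (liftLe j e) = liftLe (Suc j) (liftLe i e)"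
  by (induct u and e arbitrary: i j and i j rule: trm.induct etrm.induct) auto

lemma liftM_liftL:
  shows "liftM k (liftL j u) = liftL j (liftM k u)"
    and "liftMe k (liftLe j e) = liftLe j (liftMe k e)"
  by (induct u and e arbitrary: j k and j k rule: trm.induct etrm.induct) auto

lemma liftM_liftM:
  shows "i \<le> k \<Longrightarrow> liftM (Suc k) (liftM i u) = liftM i (liftM k u)"
    and "i \<le> k \<Longrightarrow> liftMe (Suc k) (liftMe i e) = liftMe i (liftMe k e)"
  by (induct u and e arbitrary: i k and i k rule: trm.induct etrm.induct) auto

lemma substL_liftL_Suc:
  shows "j \<le> k \<Longrightarrow> substL (liftL j u) (Suc k) (liftL j a) = liftL j (substL u k a)"
    and "j \<le> k \<Longrightarrow> substLe (liftLe j e) (Suc k) (liftL j a) = liftLe j (substLe e k a)"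
  by (induct u and e arbitrary: j k a and j k a rule: trm.induct etrm.induct)
     (auto simp: liftL_liftL liftM_liftL)

lemma substL_liftM:
  shows "substL (liftM j u) k (liftM j a) = liftM j (substL u k a)"
    and "substLe (liftMe j e) k (liftM j a) = liftMe j (substLe e k a)"
  by (induct u and e arbitrary: j k a and j k a rule: trm.induct etrm.induct)
     (auto simp: liftM_liftL(1)[symmetric] liftM_liftM(1)[of 0, simplified, symmetric])

lemma substL_liftL:
  shows "substL (liftL k u) k a = u"
    and "substLe (liftLe k e) k a = e"
  by (induct u and e arbitrary: k a and k a rule: trm.induct etrm.induct) auto

fun freshM :: "nat \<Rightarrow> trm \<Rightarrow> bool" and freshMe :: "nat \<Rightarrow> etrm \<Rightarrow> bool" where
  "freshM k (Var i) = True"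
| "freshM k (Lam t) = freshM k t"
| "freshM k (App t e) = (freshM k t \<and> freshMe k e)"
| "freshM k (trm.Pair t s) = (freshM k t \<and> freshM k s)"
| "freshM k (trm.Inl t) = freshM k t"
| "freshM k (trm.Inr t) = freshM k t"
| "freshM k (Mu t) = freshM (Suc k) t"
| "freshM k (MApp b t) = (b \<noteq> k \<and> freshM k t)"
| "freshMe k (ET t) = freshM k t"
| "freshMe k Pi1 = True"
| "freshMe k Pi2 = True"
| "freshMe k (Case u v) = (freshM k u \<and> freshM k v)"

lemma fresh_liftM:
  shows "freshM k (liftM k u)" and "freshMe k (liftMe k e)"
  by (induct u and e arbitrary: k and k rule: trm.induct etrm.induct) auto

lemma fresh_liftM2:
  shows "freshM k u \<Longrightarrow> j \<le> k \<Longrightarrow> freshM (Suc k) (liftM j u)"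
    and "freshMe k e \<Longrightarrow> j \<le> k \<Longrightarrow> freshMe (Suc k) (liftMe j e)"
  by (induct u and e arbitrary: j k and j k rule: trm.induct etrm.induct) auto

lemma fresh_liftL:
  shows "freshM k u \<Longrightarrow> freshM k (liftL j u)"
    and "freshMe k e \<Longrightarrow> freshMe k (liftLe j e)"
  by (induct u and e arbitrary: j k and j k rule: trm.induct etrm.induct) auto

lemma substM_fresh:
  shows "freshM k u \<Longrightarrow> substM u k f = u"
    and "freshMe k e \<Longrightarrow> substMe e k f = e"
  by (induct u and e arbitrary: k f and k f rule: trm.induct etrm.induct) auto

lemma apps_Nil[simp]: "apps x [] = x" by (simp add: apps_def)
lemma apps_Cons[simp]: "apps x (e # p) = apps (App x e) p" by (simp add: apps_def)
lemma apps_snoc: "apps x (p @ [e]) = App (apps x p) e" by (simp add: apps_def)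

lemma liftM_apps: "liftM k (apps x p) = apps (liftM k x) (map (liftMe k) p)"
  by (induct p arbitrary: x) auto
lemma substL_apps: "substL (apps x p) k a = apps (substL x k a) (map (\<lambda>f. substLe f k a) p)"
  by (induct p arbitrary: x) auto
lemma substM_apps: "substM (apps x p) k e = apps (substM x k e) (map (\<lambda>f. substMe f k e) p)"
  by (induct p arbitrary: x) auto
lemma fresh_apps: "freshM k (apps x p) = (freshM k x \<and> (\<forall>f\<in>set p. freshMe k f))"
  by (induct p arbitrary: x) auto

definition upL :: "(nat \<Rightarrow> trm) \<Rightarrow> nat \<Rightarrow> trm" where
  "upL \<sigma> = (\<lambda>i. case i of 0 \<Rightarrow> Var 0 | Suc j \<Rightarrow> liftL 0 (\<sigma> j))"
definition upLr :: "(nat \<Rightarrow> etrm list) \<Rightarrow> nat \<Rightarrow> etrm list" where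
  "upLr \<rho> = (\<lambda>b. map (liftLe 0) (\<rho> b))"
definition upM :: "(nat \<Rightarrow> trm) \<Rightarrow> nat \<Rightarrow> trm" where
  "upM \<sigma> = (\<lambda>i. liftM 0 (\<sigma> i))"
definition upMr :: "(nat \<Rightarrow> etrm list) \<Rightarrow> nat \<Rightarrow> etrm list" where
  "upMr \<rho> = (\<lambda>b. case b of 0 \<Rightarrow> [] | Suc c \<Rightarrow> map (liftMe 0) (\<rho> c))"
definition upMn :: "(nat \<Rightarrow> nat) \<Rightarrow> nat \<Rightarrow> nat" where
  "upMn r = (\<lambda>b. case b of 0 \<Rightarrow> 0 | Suc c \<Rightarrow> Suc (r c))"
definition cons0 :: "trm \<Rightarrow> (nat \<Rightarrow> trm) \<Rightarrow> nat \<Rightarrow> trm" where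
  "cons0 a \<sigma> = (\<lambda>i. case i of 0 \<Rightarrow> a | Suc j \<Rightarrow> \<sigma> j)"

fun Phi :: "(nat \<Rightarrow> trm) \<Rightarrow> (nat \<Rightarrow> etrm list) \<Rightarrow> (nat \<Rightarrow> nat) \<Rightarrow> trm \<Rightarrow> trm"
and Phie :: "(nat \<Rightarrow> trm) \<Rightarrow> (nat \<Rightarrow> etrm list) \<Rightarrow> (nat \<Rightarrow> nat) \<Rightarrow> etrm \<Rightarrow> etrm" where
  "Phi \<sigma> \<rho> r (Var x) = \<sigma> x"
| "Phi \<sigma> \<rho> r (Lam s) = Lam (Phi (upL \<sigma>) (upLr \<rho>) r s)"
| "Phi \<sigma> \<rho> r (App s e) = App (Phi \<sigma> \<rho> r s) (Phie \<sigma> \<rho> r e)"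
| "Phi \<sigma> \<rho> r (trm.Pair s1 s2) = trm.Pair (Phi \<sigma> \<rho> r s1) (Phi \<sigma> \<rho> r s2)"
| "Phi \<sigma> \<rho> r (trm.Inl s) = trm.Inl (Phi \<sigma> \<rho> r s)"
| "Phi \<sigma> \<rho> r (trm.Inr s) = trm.Inr (Phi \<sigma> \<rho> r s)"
| "Phi \<sigma> \<rho> r (Mu s) = Mu (Phi (upM \<sigma>) (upMr \<rho>) (upMn r) s)"
| "Phi \<sigma> \<rho> r (MApp b s) = MApp (r b) (apps (Phi \<sigma> \<rho> r s) (\<rho> b))"
| "Phie \<sigma> \<rho> r (ET s) = ET (Phi \<sigma> \<rho> r s)"
| "Phie \<sigma> \<rho> r Pi1 = Pi1"
| "Phie \<sigma> \<rho> r Pi2 = Pi2"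
| "Phie \<sigma> \<rho> r (Case u v) = Case (Phi (upL \<sigma>) (upLr \<rho>) r u) (Phi (upL \<sigma>) (upLr \<rho>) r v)"

lemma Phi_id_aux: "upL Var = Var" "upLr (\<lambda>_. []) = (\<lambda>_. [])" "upM Var = Var"
  "upMr (\<lambda>_. []) = (\<lambda>_. [])" "upMn id = id" "upMn (\<lambda>a. a) = (\<lambda>a. a)"
  by (auto simp: upL_def upLr_def upM_def upMr_def upMn_def fun_eq_iff split: nat.split)

lemma Phi_id:
  shows "Phi Var (\<lambda>_. []) id s = s" and "Phie Var (\<lambda>_. []) id e = e"
  by (induct s and e rule: trm.induct etrm.induct) (auto simp: Phi_id_aux)

lemma Phi_substL:
  shows "\<And>\<sigma> \<rho> r k a. substL (Phi \<sigma> \<rho> r s) k a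
     = Phi (\<lambda>x. substL (\<sigma> x) k a) (\<lambda>b. map (\<lambda>f. substLe f k a) (\<rho> b)) r s"
    and "\<And>\<sigma> \<rho> r k a. substLe (Phie \<sigma> \<rho> r e) k a
     = Phie (\<lambda>x. substL (\<sigma> x) k a) (\<lambda>b. map (\<lambda>f. substLe f k a) (\<rho> b)) r e"
proof (induct s and e rule: trm.induct etrm.induct)
  case (Lam s)
  have 1: "(\<lambda>x. substL (upL \<sigma> x) (Suc k) (liftL 0 a)) = upL (\<lambda>x. substL (\<sigma> x) k a)"
    by (auto simp: upL_def fun_eq_iff substL_liftL_Suc split: nat.split)
  have 2: "(\<lambda>b. map (\<lambda>f. substLe f (Suc k) (liftL 0 a)) (upLr \<rho> b)) = upLr (\<lambda>b. map (\<lambda>f. substLe f k a) (\<rho> b))"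
    by (auto simp: upLr_def fun_eq_iff substL_liftL_Suc)
  show ?case using Lam 1 2 by simp
next
  case (Mu s)
  have 1: "(\<lambda>x. substL (upM \<sigma> x) k (liftM 0 a)) = upM (\<lambda>x. substL (\<sigma> x) k a)"
    by (auto simp: upM_def fun_eq_iff substL_liftM)
  have 2: "(\<lambda>b. map (\<lambda>f. substLe f k (liftM 0 a)) (upMr \<rho> b)) = upMr (\<lambda>b. map (\<lambda>f. substLe f k a) (\<rho> b))"
    by (auto simp: upMr_def fun_eq_iff substL_liftM split: nat.split)
  show ?case using Mu 1 2 by simp
next
  case (Case u v)
  have 1: "(\<lambda>x. substL (upL \<sigma> x) (Suc k) (liftL 0 a)) = upL (\<lambda>x. substL (\<sigma> x) k a)"
    by (auto simp: upL_def fun_eq_iff substL_liftL_Suc split: nat.split)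
  have 2: "(\<lambda>b. map (\<lambda>f. substLe f (Suc k) (liftL 0 a)) (upLr \<rho> b)) = upLr (\<lambda>b. map (\<lambda>f. substLe f k a) (\<rho> b))"
    by (auto simp: upLr_def fun_eq_iff substL_liftL_Suc)
  show ?case using Case 1 2 by simp
qed (auto simp: substL_apps)

lemma Phi_liftM:
  shows "\<And>\<sigma> \<rho> r k. liftM k (Phi \<sigma> \<rho> r s)
     = Phi (\<lambda>x. liftM k (\<sigma> x)) (\<lambda>b. map (liftMe k) (\<rho> b)) (\<lambda>b. if r b < k then r b else Suc (r b)) s"
    and "\<And>\<sigma> \<rho> r k. liftMe k (Phie \<sigma> \<rho> r e)
     = Phie (\<lambda>x. liftM k (\<sigma> x)) (\<lambda>b. map (liftMe k) (\<rho> b)) (\<lambda>b. if r b < k then r b else Suc (r b)) e"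
proof (induct s and e rule: trm.induct etrm.induct)
  case (Lam s)
  have 1: "(\<lambda>x. liftM k (upL \<sigma> x)) = upL (\<lambda>x. liftM k (\<sigma> x))"
    by (auto simp: upL_def fun_eq_iff liftM_liftL split: nat.split)
  have 2: "(\<lambda>b. map (liftMe k) (upLr \<rho> b)) = upLr (\<lambda>b. map (liftMe k) (\<rho> b))"
    by (auto simp: upLr_def fun_eq_iff liftM_liftL)
  show ?case using Lam 1 2 by simp
next
  case (Mu s)
  have 1: "(\<lambda>x. liftM (Suc k) (upM \<sigma> x)) = upM (\<lambda>x. liftM k (\<sigma> x))"
    by (auto simp: upM_def fun_eq_iff liftM_liftM)
  have 2: "(\<lambda>b. map (liftMe (Suc k)) (upMr \<rho> b)) = upMr (\<lambda>b. map (liftMe k) (\<rho> b))"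
    by (auto simp: upMr_def fun_eq_iff liftM_liftM split: nat.split)
  have 3: "(\<lambda>b. if upMn r b < Suc k then upMn r b else Suc (upMn r b)) = upMn (\<lambda>b. if r b < k then r b else Suc (r b))"
    by (auto simp: upMn_def fun_eq_iff split: nat.split)
  show ?case using Mu 1 2 3 by simp
next
  case (Case u v)
  have 1: "(\<lambda>x. liftM k (upL \<sigma> x)) = upL (\<lambda>x. liftM k (\<sigma> x))"
    by (auto simp: upL_def fun_eq_iff liftM_liftL split: nat.split)
  have 2: "(\<lambda>b. map (liftMe k) (upLr \<rho> b)) = upLr (\<lambda>b. map (liftMe k) (\<rho> b))"
    by (auto simp: upLr_def fun_eq_iff liftM_liftL)
  show ?case using Case 1 2 by simp
qed (auto simp: liftM_apps)

lemma Phi_substM: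
  shows "\<And>\<sigma> \<rho> r k f. (\<forall>x. freshM k (\<sigma> x)) \<Longrightarrow> (\<forall>b. \<forall>g\<in>set (\<rho> b). freshMe k g) \<Longrightarrow> freshMe k f \<Longrightarrow>
     substM (Phi \<sigma> \<rho> r s) k f = Phi \<sigma> (\<lambda>b. if r b = k then \<rho> b @ [f] else \<rho> b) r s"
    and "\<And>\<sigma> \<rho> r k f. (\<forall>x. freshM k (\<sigma> x)) \<Longrightarrow> (\<forall>b. \<forall>g\<in>set (\<rho> b). freshMe k g) \<Longrightarrow> freshMe k f \<Longrightarrow>
     substMe (Phie \<sigma> \<rho> r e) k f = Phie \<sigma> (\<lambda>b. if r b = k then \<rho> b @ [f] else \<rho> b) r e"
proof (induct s and e rule: trm.induct etrm.induct)
  case (Var x)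
  then show ?case by (simp add: substM_fresh)
next
  case (Lam s)
  have f1: "\<forall>x. freshM k (upL \<sigma> x)" using Lam.prems
    by (auto simp: upL_def fresh_liftL split: nat.split)
  have f2: "\<forall>b. \<forall>g\<in>set (upLr \<rho> b). freshMe k g" using Lam.prems
    by (auto simp: upLr_def fresh_liftL)
  have 2: "(\<lambda>b. if r b = k then upLr \<rho> b @ [liftLe 0 f] else upLr \<rho> b) = upLr (\<lambda>b. if r b = k then \<rho> b @ [f] else \<rho> b)"
    by (auto simp: upLr_def fun_eq_iff)
  show ?case using Lam.hyps[OF f1 f2 fresh_liftL(2)[OF Lam.prems(3)]] 2 by simp
next
  case (Mu s)
  have f1: "\<forall>x. freshM (Suc k) (upM \<sigma> x)" using Mu.prems
    by (auto simp: upM_def fresh_liftM2)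
  have f2: "\<forall>b. \<forall>g\<in>set (upMr \<rho> b). freshMe (Suc k) g" using Mu.prems
    by (auto simp: upMr_def fresh_liftM2 split: nat.split)
  have 2: "(\<lambda>b. if upMn r b = Suc k then upMr \<rho> b @ [liftMe 0 f] else upMr \<rho> b) = upMr (\<lambda>b. if r b = k then \<rho> b @ [f] else \<rho> b)"
    by (auto simp: upMr_def upMn_def fun_eq_iff split: nat.split)
  show ?case using Mu.hyps[OF f1 f2 fresh_liftM2(2)[OF Mu.prems(3)]] 2 by simp
next
  case (MApp b s)
  have m: "map (\<lambda>g. substMe g k f) (\<rho> b) = \<rho> b"
    using MApp.prems(2) by (auto intro!: map_idI substM_fresh(2))
  show ?case using MApp by (simp add: substM_apps m apps_snoc)
next
  case (Case u v)
  have f1: "\<forall>x. freshM k (upL \<sigma> x)" using Case.prems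
    by (auto simp: upL_def fresh_liftL split: nat.split)
  have f2: "\<forall>b. \<forall>g\<in>set (upLr \<rho> b). freshMe k g" using Case.prems
    by (auto simp: upLr_def fresh_liftL)
  have 2: "(\<lambda>b. if r b = k then upLr \<rho> b @ [liftLe 0 f] else upLr \<rho> b) = upLr (\<lambda>b. if r b = k then \<rho> b @ [f] else \<rho> b)"
    by (auto simp: upLr_def fun_eq_iff)
  show ?case using Case.hyps(1)[OF f1 f2 fresh_liftL(2)[OF Case.prems(3)]]
     Case.hyps(2)[OF f1 f2 fresh_liftL(2)[OF Case.prems(3)]] 2 by simp
qed auto

definition lifts :: "nat \<Rightarrow> trm \<Rightarrow> trm" where "lifts n = (liftM 0 ^^ n)"
definition liftsE :: "nat \<Rightarrow> etrm \<Rightarrow> etrm" where "liftsE n = (liftMe 0 ^^ n)"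

lemma lifts_0[simp]: "lifts 0 x = x" by (simp add: lifts_def)
lemma liftsE_0[simp]: "liftsE 0 x = x" by (simp add: liftsE_def)
lemma liftsE_0': "liftsE 0 = (\<lambda>x. x)" by (simp add: liftsE_def id_def)
lemma liftsE_one': "liftsE (Suc 0) = liftMe 0" by (simp add: liftsE_def)
lemma lifts_Suc: "lifts (Suc n) x = liftM 0 (lifts n x)" by (simp add: lifts_def)
lemma liftsE_Suc: "liftsE (Suc n) x = liftMe 0 (liftsE n x)" by (simp add: liftsE_def)
lemma lifts_add: "lifts n (lifts m x) = lifts (n + m) x" by (simp add: lifts_def funpow_add)
lemma liftsE_add: "liftsE n (liftsE m x) = liftsE (n + m) x" by (simp add: liftsE_def funpow_add)
lemma lifts_one: "lifts (Suc 0) x = liftM 0 x" by (simp add: lifts_def)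
lemma liftsE_one: "liftsE (Suc 0) x = liftMe 0 x" by (simp add: liftsE_def)
lemma liftsE_ET[simp]: "liftsE n (ET u) = ET (lifts n u)" by (induct n) (auto simp: lifts_Suc liftsE_Suc)
lemma liftsE_Pi1[simp]: "liftsE n Pi1 = Pi1" by (induct n) (auto simp: liftsE_Suc)
lemma liftsE_Pi2[simp]: "liftsE n Pi2 = Pi2" by (induct n) (auto simp: liftsE_Suc)
lemma liftsE_Case[simp]: "liftsE n (Case u v) = Case (lifts n u) (lifts n v)"
  by (induct n) (auto simp: lifts_Suc liftsE_Suc)
lemma lifts_Var[simp]: "lifts n (Var i) = Var i" by (induct n) (auto simp: lifts_Suc)
lemma lifts_liftL: "lifts n (liftL 0 u) = liftL 0 (lifts n u)"
  by (induct n) (auto simp: lifts_Suc liftM_liftL)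
lemma liftsE_liftLe: "liftsE n (liftLe 0 u) = liftLe 0 (liftsE n u)"
  by (induct n) (auto simp: liftsE_Suc liftM_liftL)

lemma Phi_lifts: "lifts n (Phi \<sigma> \<rho> r s) = Phi (\<lambda>x. lifts n (\<sigma> x)) (\<lambda>b. map (liftsE n) (\<rho> b)) (\<lambda>b. r b + n) s"
proof (induct n)
  case 0 then show ?case by simp
next
  case (Suc n) then show ?case
    by (simp add: lifts_Suc Phi_liftM(1) liftsE_Suc o_def)
qed

definition Pole :: "trm \<Rightarrow> trm set" where
  "Pole t = {s. \<exists>w. reds s w \<and> inM t w}"

definition RealOf :: "(trm \<Rightarrow> etrm list set) \<Rightarrow> trm \<Rightarrow> trm \<Rightarrow> bool" where
  "RealOf S t s = (\<forall>n p. p \<in> S (lifts n t) \<longrightarrow> apps (lifts n s) p \<in> Pole (lifts n t))"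

primrec Stk :: "form \<Rightarrow> trm \<Rightarrow> etrm list set" where
  "Stk (PVar q) = (\<lambda>t. UNIV)"
| "Stk Bot = (\<lambda>t. {[]})"
| "Stk (Imp A B) = (\<lambda>t. {ET u # p | u p. RealOf (Stk A) t u \<and> p \<in> Stk B t})"
| "Stk (Conj A B) = (\<lambda>t. {Pi1 # p | p. p \<in> Stk A t} \<union> {Pi2 # p | p. p \<in> Stk B t})"
| "Stk (Disj A B) = (\<lambda>t. {Case u v # p | u v p.
     (\<forall>n a. RealOf (Stk A) (lifts n t) a \<longrightarrow> apps (substL (lifts n u) 0 a) (map (liftsE n) p) \<in> Pole (lifts n t)) \<and>
     (\<forall>n a. RealOf (Stk B) (lifts n t) a \<longrightarrow> apps (substL (lifts n v) 0 a) (map (liftsE n) p) \<in> Pole (lifts n t))})"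

abbreviation Real :: "form \<Rightarrow> trm \<Rightarrow> trm \<Rightarrow> bool" where
  "Real A \<equiv> RealOf (Stk A)"

lemma Real_lifts: "Real A t s \<Longrightarrow> Real A (lifts m t) (lifts m s)"
  unfolding RealOf_def by (metis lifts_add)

lemma Stk_lifts: "p \<in> Stk A t \<Longrightarrow> map (liftsE m) p \<in> Stk A (lifts m t)"
proof (induct A arbitrary: t p)
  case (Imp A B)
  from Imp.prems obtain u q where p: "p = ET u # q" "Real A t u" "q \<in> Stk B t" by auto
  have "Real A (lifts m t) (lifts m u)" using p(2) by (rule Real_lifts)
  moreover have "map (liftsE m) q \<in> Stk B (lifts m t)" using Imp.hyps(2) p(3) by blast
  ultimately show ?case unfolding p by simp
next
  case (Conj A B)
  then show ?case by auto
next
  case (Disj A B)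
  from Disj.prems obtain u v q where p: "p = Case u v # q" and
    hA: "\<forall>n a. Real A (lifts n t) a \<longrightarrow> apps (substL (lifts n u) 0 a) (map (liftsE n) q) \<in> Pole (lifts n t)" and
    hB: "\<forall>n a. Real B (lifts n t) a \<longrightarrow> apps (substL (lifts n v) 0 a) (map (liftsE n) q) \<in> Pole (lifts n t)"
    by auto
  have mm: "\<And>n. map (liftsE n) (map (liftsE m) q) = map (liftsE (n+m)) q"
    by (simp add: liftsE_add)
  have gA: "\<forall>n a. Real A (lifts n (lifts m t)) a \<longrightarrow> apps (substL (lifts n (lifts m u)) 0 a) (map (liftsE n) (map (liftsE m) q)) \<in> Pole (lifts n (lifts m t))"
    unfolding mm lifts_add using hA by blast
  have gB: "\<forall>n a. Real B (lifts n (lifts m t)) a \<longrightarrow> apps (substL (lifts n (lifts m v)) 0 a) (map (liftsE n) (map (liftsE m) q)) \<in> Pole (lifts n (lifts m t))"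
    unfolding mm lifts_add using hB by blast
  show ?case unfolding p using gA gB by auto
qed auto

definition valid :: "trm \<Rightarrow> (nat \<Rightarrow> form option) \<Rightarrow> (nat \<Rightarrow> form option) \<Rightarrow> (nat \<Rightarrow> trm) \<Rightarrow> (nat \<Rightarrow> etrm list) \<Rightarrow> bool" where
  "valid t G D \<sigma> \<rho> = ((\<forall>x B. G x = Some B \<longrightarrow> Real B t (\<sigma> x)) \<and> (\<forall>b B. D b = Some B \<longrightarrow> \<rho> b \<in> Stk B t))"

lemma valid_lifts: "valid t G D \<sigma> \<rho> \<Longrightarrow> valid (lifts n t) G D (\<lambda>x. lifts n (\<sigma> x)) (\<lambda>b. map (liftsE n) (\<rho> b))"
  unfolding valid_def by (auto simp: Real_lifts Stk_lifts)

lemma real_from: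
  assumes "\<And>t \<sigma> \<rho> r p. valid t G D \<sigma> \<rho> \<Longrightarrow> p \<in> Stk A t \<Longrightarrow> apps (Phi \<sigma> \<rho> r s) p \<in> Pole t"
    and "valid t G D \<sigma> \<rho>"
  shows "Real A t (Phi \<sigma> \<rho> r s)"
  unfolding RealOf_def Phi_lifts using assms(1)[OF valid_lifts[OF assms(2)]] by blast

lemma red_apps: "red x y \<Longrightarrow> red (apps x p) (apps y p)"
  by (induct p arbitrary: x y) (auto intro: c_app1)

lemma Pole_back: "red x y \<Longrightarrow> y \<in> Pole t \<Longrightarrow> x \<in> Pole t"
  unfolding Pole_def by (auto intro: converse_rtranclp_into_rtranclp)

lemma Pole_backs: "reds x y \<Longrightarrow> y \<in> Pole t \<Longrightarrow> x \<in> Pole t"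
  unfolding Pole_def by (auto intro: rtranclp_trans)

lemma reds_MApp: "reds x y \<Longrightarrow> reds (MApp a x) (MApp a y)"
  by (induct rule: rtranclp_induct) (auto intro: rtranclp.rtrancl_into_rtrancl c_mapp)

lemma reds_Mu: "reds x y \<Longrightarrow> reds (Mu x) (Mu y)"
  by (induct rule: rtranclp_induct) (auto intro: rtranclp.rtrancl_into_rtrancl c_mu)

lemma Real_use: "Real A t s \<Longrightarrow> p \<in> Stk A t \<Longrightarrow> apps s p \<in> Pole t"
  unfolding RealOf_def by (metis lifts_0)

lemma subst_up: "substL (Phi (upL \<sigma>) (upLr \<rho>) r s) 0 a = Phi (cons0 a \<sigma>) \<rho> r s"
proof -
  have 1: "(\<lambda>x. substL (upL \<sigma> x) 0 a) = cons0 a \<sigma>"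
    by (auto simp: upL_def cons0_def fun_eq_iff substL_liftL split: nat.split)
  have 2: "(\<lambda>b. map (\<lambda>f. substLe f 0 a) (upLr \<rho> b)) = \<rho>"
    by (auto simp: upLr_def fun_eq_iff substL_liftL o_def)
  show ?thesis by (simp add: Phi_substL 1 2)
qed

lemma lifts_up: "(\<lambda>x. lifts n (upL \<sigma> x)) = upL (\<lambda>x. lifts n (\<sigma> x))"
   "(\<lambda>b. map (liftsE n) (upLr \<rho> b)) = upLr (\<lambda>b. map (liftsE n) (\<rho> b))"
  by (auto simp: upL_def upLr_def fun_eq_iff lifts_liftL liftsE_liftLe split: nat.split)

lemma valid_cons: "valid t G D \<sigma> \<rho> \<Longrightarrow> Real A t a \<Longrightarrow> valid t (ext A G) D (cons0 a \<sigma>) \<rho>"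
  unfolding valid_def by (auto simp: ext_def cons0_def split: nat.split)

lemma mu_push:
  "reds (apps (Mu (Phi (upM \<sigma>) ((upMr \<rho>)(0 := map (liftMe 0) q)) (upMn r) s)) p)
        (Mu (Phi (upM \<sigma>) ((upMr \<rho>)(0 := map (liftMe 0) (q @ p))) (upMn r) s))"
proof (induct p arbitrary: q)
  case Nil then show ?case by simp
next
  case (Cons e p)
  have f1: "\<forall>x. freshM 0 (upM \<sigma> x)" by (simp add: upM_def fresh_liftM)
  have f2: "\<forall>b. \<forall>g\<in>set (((upMr \<rho>)(0 := map (liftMe 0) q)) b). freshMe 0 g"
    by (auto simp: upMr_def fresh_liftM split: nat.split)
  have eq: "(\<lambda>b. if upMn r b = 0 then ((upMr \<rho>)(0 := map (liftMe 0) q)) b @ [liftMe 0 e]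
             else ((upMr \<rho>)(0 := map (liftMe 0) q)) b) = (upMr \<rho>)(0 := map (liftMe 0) (q @ [e]))"
    by (auto simp: upMn_def fun_eq_iff split: nat.split)
  have st: "red (App (Mu (Phi (upM \<sigma>) ((upMr \<rho>)(0 := map (liftMe 0) q)) (upMn r) s)) e)
     (Mu (Phi (upM \<sigma>) ((upMr \<rho>)(0 := map (liftMe 0) (q @ [e]))) (upMn r) s))"
    using r_mu[of "Phi (upM \<sigma>) ((upMr \<rho>)(0 := map (liftMe 0) q)) (upMn r) s" e]
    by (simp add: Phi_substM(1)[OF f1 f2 fresh_liftM(2)] eq)
  have A: "red (apps (Mu (Phi (upM \<sigma>) ((upMr \<rho>)(0 := map (liftMe 0) q)) (upMn r) s)) (e # p))
     (apps (Mu (Phi (upM \<sigma>) ((upMr \<rho>)(0 := map (liftMe 0) (q @ [e]))) (upMn r) s)) p)"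
    unfolding apps_Cons by (rule red_apps[OF st])
  have B: "reds (apps (Mu (Phi (upM \<sigma>) ((upMr \<rho>)(0 := map (liftMe 0) (q @ [e]))) (upMn r) s)) p)
        (Mu (Phi (upM \<sigma>) ((upMr \<rho>)(0 := map (liftMe 0) (q @ e # p))) (upMn r) s))"
    using Cons.hyps[of "q @ [e]"] unfolding append_assoc append.simps .
  show ?case by (rule converse_rtranclp_into_rtranclp[OF A B])
qed

lemma adequacy:
  "typing G s A D \<Longrightarrow> valid \<tau> G D \<sigma> \<rho> \<Longrightarrow> p \<in> Stk A \<tau> \<Longrightarrow> apps (Phi \<sigma> \<rho> r s) p \<in> Pole \<tau>"
proof (induct arbitrary: \<tau> \<sigma> \<rho> r p rule: typing.induct)
  case (ty_var G x A D)
  then have "Real A \<tau> (\<sigma> x)" unfolding valid_def by blast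
  then show ?case using ty_var Real_use by simp
next
  case (ty_lam A G s B D)
  from ty_lam.prems obtain a q where p: "p = ET a # q" "Real A \<tau> a" "q \<in> Stk B \<tau>" by auto
  have "apps (Phi (cons0 a \<sigma>) \<rho> r s) q \<in> Pole \<tau>"
    using ty_lam.hyps(2)[OF valid_cons[OF ty_lam.prems(1) p(2)] p(3)] .
  then show ?case unfolding p
    using Pole_back[OF red_apps[OF r_beta[of "Phi (upL \<sigma>) (upLr \<rho>) r s" a]]]
    by (simp add: subst_up)
next
  case (ty_app G u A B D v)
  have "Real A \<tau> (Phi \<sigma> \<rho> r v)" by (rule real_from[OF ty_app.hyps(4) ty_app.prems(1)])
  then have "ET (Phi \<sigma> \<rho> r v) # p \<in> Stk (Imp A B) \<tau>" using ty_app.prems(2) by simp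
  from ty_app.hyps(2)[OF ty_app.prems(1) this] show ?case by simp
next
  case (ty_pair G u A D v B)
  from ty_pair.prems(2) consider q where "p = Pi1 # q" "q \<in> Stk A \<tau>" | q where "p = Pi2 # q" "q \<in> Stk B \<tau>"
    by auto
  then show ?case
  proof cases
    case 1
    then show ?thesis using ty_pair.hyps(2)[OF ty_pair.prems(1), of q r]
      Pole_back[OF red_apps[OF r_pi1[of "Phi \<sigma> \<rho> r u" "Phi \<sigma> \<rho> r v"]]] by simp
  next
    case 2
    then show ?thesis using ty_pair.hyps(4)[OF ty_pair.prems(1), of q r]
      Pole_back[OF red_apps[OF r_pi2[of "Phi \<sigma> \<rho> r u" "Phi \<sigma> \<rho> r v"]]] by simp
  qed
next
  case (ty_pi1 G s A B D)
  have "Pi1 # p \<in> Stk (Conj A B) \<tau>" using ty_pi1.prems(2) by simp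
  from ty_pi1.hyps(2)[OF ty_pi1.prems(1) this] show ?case by simp
next
  case (ty_pi2 G s A B D)
  have "Pi2 # p \<in> Stk (Conj A B) \<tau>" using ty_pi2.prems(2) by simp
  from ty_pi2.hyps(2)[OF ty_pi2.prems(1) this] show ?case by simp
next
  case (ty_inl G s A D B)
  from ty_inl.prems(2) obtain u v q where p: "p = Case u v # q" and
    hA: "\<forall>n a. Real A (lifts n \<tau>) a \<longrightarrow> apps (substL (lifts n u) 0 a) (map (liftsE n) q) \<in> Pole (lifts n \<tau>)"
    by auto
  have "Real A \<tau> (Phi \<sigma> \<rho> r s)" by (rule real_from[OF ty_inl.hyps(2) ty_inl.prems(1)])
  with hA have "apps (substL (lifts 0 u) 0 (Phi \<sigma> \<rho> r s)) (map (liftsE 0) q) \<in> Pole (lifts 0 \<tau>)"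
    by (metis lifts_0)
  then have "apps (substL u 0 (Phi \<sigma> \<rho> r s)) q \<in> Pole \<tau>"
    by (simp add: liftsE_0')
  then show ?case unfolding p
    using Pole_back[OF red_apps[OF r_inl[of "Phi \<sigma> \<rho> r s" u v]]] by simp
next
  case (ty_inr G s B D A)
  from ty_inr.prems(2) obtain u v q where p: "p = Case u v # q" and
    hB: "\<forall>n a. Real B (lifts n \<tau>) a \<longrightarrow> apps (substL (lifts n v) 0 a) (map (liftsE n) q) \<in> Pole (lifts n \<tau>)"
    by auto
  have "Real B \<tau> (Phi \<sigma> \<rho> r s)" by (rule real_from[OF ty_inr.hyps(2) ty_inr.prems(1)])
  with hB have "apps (substL (lifts 0 v) 0 (Phi \<sigma> \<rho> r s)) (map (liftsE 0) q) \<in> Pole (lifts 0 \<tau>)"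
    by (metis lifts_0)
  then have "apps (substL v 0 (Phi \<sigma> \<rho> r s)) q \<in> Pole \<tau>"
    by (simp add: liftsE_0')
  then show ?case unfolding p
    using Pole_back[OF red_apps[OF r_inr[of "Phi \<sigma> \<rho> r s" u v]]] by simp
next
  case (ty_case G s A B D u C v)
  let ?u = "Phi (upL \<sigma>) (upLr \<rho>) r u"
  let ?v = "Phi (upL \<sigma>) (upLr \<rho>) r v"
  have hA: "apps (substL (lifts n ?u) 0 a) (map (liftsE n) p) \<in> Pole (lifts n \<tau>)"
    if "Real A (lifts n \<tau>) a" for n a
  proof -
    have e: "substL (lifts n ?u) 0 a = Phi (cons0 a (\<lambda>x. lifts n (\<sigma> x))) (\<lambda>b. map (liftsE n) (\<rho> b)) (\<lambda>b. r b + n) u"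
      by (simp add: Phi_lifts lifts_up subst_up)
    show ?thesis unfolding e
      by (rule ty_case.hyps(4)[OF valid_cons[OF valid_lifts[OF ty_case.prems(1)] that] Stk_lifts[OF ty_case.prems(2)]])
  qed
  have hB: "apps (substL (lifts n ?v) 0 a) (map (liftsE n) p) \<in> Pole (lifts n \<tau>)"
    if "Real B (lifts n \<tau>) a" for n a
  proof -
    have e: "substL (lifts n ?v) 0 a = Phi (cons0 a (\<lambda>x. lifts n (\<sigma> x))) (\<lambda>b. map (liftsE n) (\<rho> b)) (\<lambda>b. r b + n) v"
      by (simp add: Phi_lifts lifts_up subst_up)
    show ?thesis unfolding e
      by (rule ty_case.hyps(6)[OF valid_cons[OF valid_lifts[OF ty_case.prems(1)] that] Stk_lifts[OF ty_case.prems(2)]])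
  qed
  have "Case ?u ?v # p \<in> Stk (Disj A B) \<tau>" using hA hB by auto
  from ty_case.hyps(2)[OF ty_case.prems(1) this] show ?case by simp
next
  case (ty_mapp D a A G s)
  have p: "p = []" using ty_mapp.prems(2) by simp
  have "\<rho> a \<in> Stk A \<tau>" using ty_mapp.prems(1) ty_mapp.hyps(1) unfolding valid_def by blast
  from ty_mapp.hyps(3)[OF ty_mapp.prems(1) this, of r]
  obtain w where w: "reds (apps (Phi \<sigma> \<rho> r s) (\<rho> a)) w" "inM \<tau> w" unfolding Pole_def by blast
  have "MApp (r a) w \<in> Pole \<tau>" unfolding Pole_def using w(2) by (blast intro: M_app)
  then show ?case unfolding p using Pole_backs[OF reds_MApp[OF w(1)]] by simp
next
  case (ty_mu G s A D)
  let ?\<rho> = "(upMr \<rho>)(0 := map (liftMe 0) p)"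
  have v: "valid (liftM 0 \<tau>) G (ext A D) (upM \<sigma>) ?\<rho>"
    using ty_mu.prems Real_lifts[of _ \<tau> _ "Suc 0"] Stk_lifts[of _ _ \<tau> "Suc 0"]
    unfolding valid_def
    by (auto simp: ext_def upM_def upMr_def lifts_one liftsE_one' split: nat.split)
  have bot: "[] \<in> Stk Bot (liftM 0 \<tau>)" by simp
  have h: "apps (Phi (upM \<sigma>) ?\<rho> (upMn r) s) [] \<in> Pole (liftM 0 \<tau>)"
    by (rule ty_mu.hyps(2)[OF v bot])
  then have "\<exists>w. reds (Phi (upM \<sigma>) ?\<rho> (upMn r) s) w \<and> inM (liftM 0 \<tau>) w"
    unfolding Pole_def apps_Nil mem_Collect_eq .
  then obtain w where w: "reds (Phi (upM \<sigma>) ?\<rho> (upMn r) s) w" "inM (liftM 0 \<tau>) w"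
    by (elim exE conjE)
  have "Mu w \<in> Pole \<tau>" unfolding Pole_def using w(2) by (blast intro: M_mu)
  then have m: "Mu (Phi (upM \<sigma>) ?\<rho> (upMn r) s) \<in> Pole \<tau>" by (rule Pole_backs[OF reds_Mu[OF w(1)]])
  have eq: "(upMr \<rho>)(0 := map (liftMe 0) []) = upMr \<rho>"
    by (auto simp: upMr_def fun_eq_iff split: nat.split)
  have "reds (apps (Mu (Phi (upM \<sigma>) (upMr \<rho>) (upMn r) s)) p) (Mu (Phi (upM \<sigma>) ?\<rho> (upMn r) s))"
    using mu_push[of \<sigma> \<rho> "[]" r s p] unfolding eq append_Nil .
  then show ?case unfolding Phi.simps by (rule Pole_backs[OF _ m])
qed

theorem mainTheorem6:
  fixes P :: nat and T :: trm
  assumes "typing (\<lambda>_. None) T (Imp Bot (PVar P)) (\<lambda>_. None)"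
  shows "\<forall>t us. \<exists>w. reds (apps (App T (ET t)) us) w \<and> inM t w"
proof (intro allI)
  fix t us
  have v: "valid t (\<lambda>_. None) (\<lambda>_. None) Var (\<lambda>_. [])" by (simp add: valid_def)
  have "Real Bot t t" unfolding RealOf_def Pole_def by (auto intro: M_base)
  then have "ET t # us \<in> Stk (Imp Bot (PVar P)) t" by simp
  from adequacy[OF assms v this, of id] have "apps T (ET t # us) \<in> Pole t"
    unfolding Phi_id .
  then have "apps (App T (ET t)) us \<in> Pole t" by simp
  then show "\<exists>w. reds (apps (App T (ET t)) us) w \<and> inM t w"
    unfolding Pole_def mem_Collect_eq .
qed

end
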